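(* Let $G$ be a graph with $n$ vertices. Then for every integer $m\geq 1$, $$P_{DP}(G,m)\leq \frac{m^{n}(m-1)^{|E(G)|}}{m^{|E(G)|}}.$$
   Context: All graphs are finite and simple. A cover of a graph $G$ is a pair $\mathcal{H}=(L,H)$ where $H$ is a graph and $L:V(G)\to\mathcal{P}(V(H))$ satisfies: (1) the sets $L(u)$, $u\in V(G)$, partition $V(H)$; (2) for every $u$, $H[L(u)]$ is complete; (3) if $E_H(L(u),L(v))\neq\emptyset$ then $u=v$ or $uv\in E(G)$; (4) if $uv\in E(G)$ then $E_H(L(u),L(v))$ is a matching (possibly empty). Here $E_H(S,U)$ is the set of edges of $H$ between $S$ and $U$. The cover is $m$-fold if $|L(u)|=m$ for all $u$. An $\mathcal{H}$-coloring is an independent set of $H$ of size $|V(G)|$. $P_{DP}(G,\mathcal{H})$ is the number of $\mathcal{H}$-colorings, and $P_{DP}(G,m)$ is the minimum of $P_{DP}(G,\mathcal{H})$ over all $m$-fold covers $\mathcal{H}$ of $G$. *)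

theory Defs
  imports Complex_Main
begin

definition simple_graph :: "'v set \<Rightarrow> 'v set set \<Rightarrow> bool" where
  "simple_graph V E \<longleftrightarrow> finite V \<and>
     (\<forall>e\<in>E. \<exists>x y. x \<in> V \<and> y \<in> V \<and> x \<noteq> y \<and> e = {x, y})"

definition edges_between :: "'v set set \<Rightarrow> 'v set \<Rightarrow> 'v set \<Rightarrow> 'v set set" where
  "edges_between EH S U = {e \<in> EH. \<exists>x\<in>S. \<exists>y\<in>U. e = {x, y}}"

definition is_matching :: "'v set set \<Rightarrow> bool" where
  "is_matching M \<longleftrightarrow> (\<forall>e\<in>M. \<forall>f\<in>M. e \<noteq> f \<longrightarrow> e \<inter> f = {})"

text \<open>A cover (L, H) of G = (V, E); H = (VH, EH). The vertices of H are taken from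
  the infinite type 'a \<times> nat, so every cover is represented up to isomorphism.\<close>
definition is_cover ::
  "'a set \<Rightarrow> 'a set set \<Rightarrow> ('a \<Rightarrow> ('a \<times> nat) set) \<Rightarrow> ('a \<times> nat) set \<Rightarrow> ('a \<times> nat) set set \<Rightarrow> bool" where
  "is_cover V E L VH EH \<longleftrightarrow>
     simple_graph VH EH \<and>
     (\<Union>u\<in>V. L u) = VH \<and>
     (\<forall>u\<in>V. \<forall>v\<in>V. u \<noteq> v \<longrightarrow> L u \<inter> L v = {}) \<and>
     (\<forall>u\<in>V. \<forall>x\<in>L u. \<forall>y\<in>L u. x \<noteq> y \<longrightarrow> {x, y} \<in> EH) \<and>
     (\<forall>u\<in>V. \<forall>v\<in>V. edges_between EH (L u) (L v) \<noteq> {} \<longrightarrow> u = v \<or> {u, v} \<in> E) \<and>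
     (\<forall>u\<in>V. \<forall>v\<in>V. {u, v} \<in> E \<longrightarrow> is_matching (edges_between EH (L u) (L v)))"

definition is_m_fold_cover ::
  "nat \<Rightarrow> 'a set \<Rightarrow> 'a set set \<Rightarrow> ('a \<Rightarrow> ('a \<times> nat) set) \<Rightarrow> ('a \<times> nat) set \<Rightarrow> ('a \<times> nat) set set \<Rightarrow> bool" where
  "is_m_fold_cover m V E L VH EH \<longleftrightarrow> is_cover V E L VH EH \<and> (\<forall>u\<in>V. card (L u) = m)"

definition independent_set :: "'v set \<Rightarrow> 'v set set \<Rightarrow> 'v set \<Rightarrow> bool" where
  "independent_set VH EH I \<longleftrightarrow> I \<subseteq> VH \<and> (\<forall>x\<in>I. \<forall>y\<in>I. {x, y} \<notin> EH)"

definition DP_colorings :: "'a set \<Rightarrow> ('a \<times> nat) set \<Rightarrow> ('a \<times> nat) set set \<Rightarrow> ('a \<times> nat) set set" where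
  "DP_colorings V VH EH = {I. independent_set VH EH I \<and> card I = card V}"

definition P_DP_cover :: "'a set \<Rightarrow> ('a \<times> nat) set \<Rightarrow> ('a \<times> nat) set set \<Rightarrow> nat" where
  "P_DP_cover V VH EH = card (DP_colorings V VH EH)"

definition P_DP :: "'a set \<Rightarrow> 'a set set \<Rightarrow> nat \<Rightarrow> nat" where
  "P_DP V E m = Inf {P_DP_cover V VH EH | L VH EH. is_m_fold_cover m V E L VH EH}"

end

theory Submission
  imports Defs "HOL-Library.FuncSet"
begin


definition bad :: "nat \<Rightarrow> ('a \<Rightarrow> nat) \<Rightarrow> 'a set \<Rightarrow> nat \<Rightarrow> bool" where
 "bad m c e k \<longleftrightarrow> (\<exists>x y. e = {x,y} \<and> x \<noteq> y \<and> (c x + c y) mod m = k)"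

definition Good :: "nat \<Rightarrow> 'a set \<Rightarrow> ('a set \<Rightarrow> nat) \<Rightarrow> 'a set set \<Rightarrow> ('a \<Rightarrow> nat) set" where
 "Good m V k F = {c \<in> V \<rightarrow>\<^sub>E {..<m}. \<forall>e\<in>F. \<not> bad m c e (k e)}"

lemma bad_iff: "a \<noteq> b \<Longrightarrow> bad m c {a,b} k \<longleftrightarrow> (c a + c b) mod m = k"
  unfolding bad_def by (auto simp: doubleton_eq_iff add.commute)

lemma split_step:
  assumes fin: "finite S" and m: "m \<ge> 1" and ab: "a \<noteq> b"
  shows "\<exists>k<m. real (card {c\<in>S. \<not> bad m c {a,b} k}) \<le> real (card S) * (real m - 1) / real m"
proof (rule ccontr)
  assume H: "\<not> ?thesis"
  define f where "f c = (c a + c b) mod m" for c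
  have bad: "bad m c {a,b} k \<longleftrightarrow> f c = k" for c k using bad_iff[OF ab] f_def by simp
  have Sun: "S = (\<Union>k\<in>{..<m}. {c\<in>S. f c = k})" using m by (auto simp: f_def)
  have "card S = (\<Sum>k<m. card {c\<in>S. f c = k})"
    by (subst Sun, rule card_UN_disjoint) (use fin in auto)
  hence cS: "real (card S) = (\<Sum>k<m. real (card {c\<in>S. f c = k}))" by simp
  have lt: "real (card {c\<in>S. f c = k}) < real (card S) / real m" if "k < m" for k
  proof -
    have sp: "card S = card {c\<in>S. f c = k} + card {c\<in>S. \<not> f c = k}"
      using fin by (subst card_Un_disjoint[symmetric]) (auto intro: arg_cong[where f=card])
    have "real (card {c\<in>S. \<not> f c = k}) > real (card S) * (real m - 1) / real m"
      using H that bad by auto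
    hence "real (card S) - real (card {c\<in>S. f c = k}) > real (card S) * (real m - 1) / real m"
      using sp by simp
    thus ?thesis using m by (simp add: field_simps)
  qed
  have "(\<Sum>k<m. real (card {c\<in>S. f c = k})) < (\<Sum>k<m. real (card S) / real m)"
    using m by (intro sum_strict_mono) (auto intro: lt simp: lessThan_empty_iff)
  also have "\<dots> = real (card S)" using m by simp
  finally show False using cS by simp
qed

lemma main_count:
  assumes "finite V" "m \<ge> 1" "finite F" "\<forall>e\<in>F. \<exists>x y. e = {x,y} \<and> x \<noteq> y"
  shows "\<exists>k. real (card (Good m V k F)) \<le> real m ^ card V * ((real m - 1) / real m) ^ card F"
  using assms(3,4)
proof (induction F rule: finite_induct)
  case empty
  show ?case using assms(1) by (simp add: Good_def card_PiE)
next
  case (insert e F)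
  then obtain k where k: "real (card (Good m V k F)) \<le> real m ^ card V * ((real m - 1) / real m) ^ card F"
    by auto
  obtain a b where e: "e = {a,b}" "a \<noteq> b" using insert by blast
  have finG: "finite (Good m V k F)" unfolding Good_def using assms(1) by (simp add: finite_PiE)
  obtain k0 where k0: "real (card {c\<in>Good m V k F. \<not> bad m c {a,b} k0}) \<le> real (card (Good m V k F)) * (real m - 1) / real m"
    using split_step[OF finG assms(2) e(2)] by blast
  have eq: "Good m V (k(e := k0)) (insert e F) = {c\<in>Good m V k F. \<not> bad m c {a,b} k0}"
    using insert(2) e unfolding Good_def by auto
  have "real (card (Good m V (k(e := k0)) (insert e F))) \<le> real (card (Good m V k F)) * ((real m - 1) / real m)"
    using eq k0 by simp
  also have "\<dots> \<le> real m ^ card V * ((real m - 1) / real m) ^ card F * ((real m - 1) / real m)"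
    using k assms(2) by (intro mult_right_mono) auto
  also have "\<dots> = real m ^ card V * ((real m - 1) / real m) ^ card (insert e F)"
    using insert by simp
  finally show ?case by blast
qed



lemma mod_cancel_aux:
  fixes i j j' m :: nat
  assumes "j < m" "j' < m" "(i + j) mod m = (i + j') mod m"
  shows "j = j'"
proof (rule ccontr)
  assume ne: "j \<noteq> j'"
  have "int ((i + j) mod m) = int ((i + j') mod m)" using assms(3) by simp
  hence "int (i+j) mod int m = int (i+j') mod int m" by (simp only: zmod_int)
  hence "int m dvd int (i+j) - int (i+j')" by (simp only: mod_eq_dvd_iff)
  hence d: "int m dvd int j - int j'" by simp
  have "int j - int j' \<noteq> 0" using ne by simp
  from dvd_imp_le_int[OF this d] have "int m \<le> \<bar>int j - int j'\<bar>" by simp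
  thus False using assms(1,2) by linarith
qed



definition cL :: "nat \<Rightarrow> 'a \<Rightarrow> ('a \<times> nat) set" where "cL m u = {u} \<times> {..<m}"

definition cEH :: "nat \<Rightarrow> 'a set \<Rightarrow> 'a set set \<Rightarrow> ('a set \<Rightarrow> nat) \<Rightarrow> ('a \<times> nat) set set" where
  "cEH m V E k = {{(u,i),(u,j)} | u i j. u \<in> V \<and> i<m \<and> j<m \<and> i\<noteq>j} \<union>
     {{(x,i),(y,j)} | x y i j. {x,y} \<in> E \<and> x\<noteq>y \<and> i<m \<and> j<m \<and> (i+j) mod m = k {x,y}}"

lemma sg_edge: "simple_graph V E \<Longrightarrow> {x,y} \<in> E \<Longrightarrow> x \<in> V \<and> y \<in> V \<and> x \<noteq> y"
  unfolding simple_graph_def by (metis doubleton_eq_iff)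

lemma eb_char:
  assumes sg: "simple_graph V E" and uv: "{u,v} \<in> E"
    and e: "e \<in> edges_between (cEH m V E k) (cL m u) (cL m v)"
  shows "\<exists>i j. e = {(u,i),(v,j)} \<and> i<m \<and> j<m \<and> (i+j) mod m = k {u,v}"
proof -
  have une: "u \<noteq> v" using sg_edge[OF sg uv] by simp
  obtain p q where pq: "e \<in> cEH m V E k" "p \<in> cL m u" "q \<in> cL m v" "e = {p,q}"
    using e unfolding edges_between_def by auto
  obtain i j where p: "p = (u,i)" "i<m" and q: "q = (v,j)" "j < m" using pq(2,3) by (auto simp: cL_def)
  show ?thesis
    using pq(1) unfolding cEH_def
  proof
    assume "e \<in> {{(u,i),(u,j)} | u i j. u \<in> V \<and> i<m \<and> j<m \<and> i\<noteq>j}"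
    then show ?thesis using pq(4) p q une by (auto simp: doubleton_eq_iff)
  next
    assume "e \<in> {{(x,i),(y,j)} | x y i j. {x,y} \<in> E \<and> x\<noteq>y \<and> i<m \<and> j<m \<and> (i+j) mod m = k {x,y}}"
    then obtain x y i' j' where "e = {(x,i'),(y,j')}" "(i'+j') mod m = k {x,y}" by blast
    then show ?thesis using pq(4) p q une
      by (auto simp: doubleton_eq_iff insert_commute add.commute)
  qed
qed

lemma cover_ok:
  assumes sg: "simple_graph V E" and m: "m \<ge> 1"
  shows "is_m_fold_cover m V E (cL m) (V \<times> {..<m}) (cEH m V E k)"
proof -
  have finV: "finite V" using sg simple_graph_def by auto
  have c1: "simple_graph (V \<times> {..<m}) (cEH m V E k)"
    unfolding simple_graph_def cEH_def using finV sg_edge[OF sg] by fastforce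
  have c2: "(\<Union>u\<in>V. cL m u) = V \<times> {..<m}" by (auto simp: cL_def)
  have c3: "\<forall>u\<in>V. \<forall>v\<in>V. u \<noteq> v \<longrightarrow> cL m u \<inter> cL m v = {}" by (auto simp: cL_def)
  have c4: "\<forall>u\<in>V. \<forall>x\<in>cL m u. \<forall>y\<in>cL m u. x \<noteq> y \<longrightarrow> {x, y} \<in> cEH m V E k"
    by (auto simp: cL_def cEH_def)
  have c5: "\<forall>u\<in>V. \<forall>v\<in>V. edges_between (cEH m V E k) (cL m u) (cL m v) \<noteq> {} \<longrightarrow> u = v \<or> {u, v} \<in> E"
  proof (intro ballI impI)
    fix u v assume "u \<in> V" "v \<in> V" "edges_between (cEH m V E k) (cL m u) (cL m v) \<noteq> {}"
    then obtain e p q where pq: "e \<in> cEH m V E k" "p \<in> cL m u" "q \<in> cL m v" "e = {p,q}"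
      unfolding edges_between_def by auto
    obtain i j where p: "p = (u,i)" and q: "q = (v,j)" using pq(2,3) by (auto simp: cL_def)
    show "u = v \<or> {u, v} \<in> E"
      using pq(1) unfolding cEH_def
    proof
      assume "e \<in> {{(u,i),(u,j)} | u i j. u \<in> V \<and> i<m \<and> j<m \<and> i\<noteq>j}"
      then show ?thesis using pq(4) p q by (auto simp: doubleton_eq_iff)
    next
      assume "e \<in> {{(x,i),(y,j)} | x y i j. {x,y} \<in> E \<and> x\<noteq>y \<and> i<m \<and> j<m \<and> (i+j) mod m = k {x,y}}"
      then obtain x y i' j' where "e = {(x,i'),(y,j')}" "{x,y} \<in> E" by blast
      then show ?thesis using pq(4) p q
        by (auto simp: doubleton_eq_iff insert_commute)
    qed
  qed
  have c6: "\<forall>u\<in>V. \<forall>v\<in>V. {u, v} \<in> E \<longrightarrow> is_matching (edges_between (cEH m V E k) (cL m u) (cL m v))"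
  proof (intro ballI impI)
    fix u v assume uv: "{u, v} \<in> E"
    have une: "u \<noteq> v" using sg_edge[OF sg uv] by simp
    show "is_matching (edges_between (cEH m V E k) (cL m u) (cL m v))"
      unfolding is_matching_def
    proof (intro ballI impI)
      fix e f assume e: "e \<in> edges_between (cEH m V E k) (cL m u) (cL m v)"
        and f: "f \<in> edges_between (cEH m V E k) (cL m u) (cL m v)" and ef: "e \<noteq> f"
      obtain i j where ij: "e = {(u,i),(v,j)}" "i<m" "j<m" "(i+j) mod m = k {u,v}"
        using eb_char[OF sg uv e] by blast
      obtain i' j' where ij': "f = {(u,i'),(v,j')}" "i'<m" "j'<m" "(i'+j') mod m = k {u,v}"
        using eb_char[OF sg uv f] by blast
      have "i \<noteq> i'"
      proof
        assume "i = i'"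
        hence "j = j'" using mod_cancel_aux[of j m j' i] ij ij' by simp
        thus False using ef ij ij' \<open>i = i'\<close> by simp
      qed
      moreover have "j \<noteq> j'"
      proof
        assume "j = j'"
        hence "i = i'" using mod_cancel_aux[of i m i' j] ij ij' by (simp add: add.commute)
        thus False using ef ij ij' \<open>j = j'\<close> by simp
      qed
      ultimately show "e \<inter> f = {}" using ij ij' une by auto
    qed
  qed
  show ?thesis unfolding is_m_fold_cover_def is_cover_def
    using c1 c2 c3 c4 c5 c6 by (auto simp: cL_def)
qed



lemma cEH_clique: "u\<in>V \<Longrightarrow> i<m \<Longrightarrow> j<m \<Longrightarrow> i\<noteq>j \<Longrightarrow> {(u,i),(u,j)} \<in> cEH m V E k"
  unfolding cEH_def by blast

lemma cEH_match: "{x,y}\<in>E \<Longrightarrow> x\<noteq>y \<Longrightarrow> i<m \<Longrightarrow> j<m \<Longrightarrow> (i+j) mod m = k {x,y} \<Longrightarrow> {(x,i),(y,j)} \<in> cEH m V E k"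
  unfolding cEH_def by blast

lemma count_le:
  assumes sg: "simple_graph V E" and m: "m \<ge> 1"
  shows "P_DP_cover V (V \<times> {..<m}) (cEH m V E k) \<le> card (Good m V k E)"
proof -
  have finV: "finite V" using sg simple_graph_def by auto
  let ?g = "\<lambda>c. (\<lambda>u. (u, c u)) ` V"
  have sub: "DP_colorings V (V \<times> {..<m}) (cEH m V E k) \<subseteq> ?g ` Good m V k E"
  proof
    fix I assume "I \<in> DP_colorings V (V \<times> {..<m}) (cEH m V E k)"
    hence IH: "I \<subseteq> V \<times> {..<m}" "\<forall>x\<in>I. \<forall>y\<in>I. {x, y} \<notin> cEH m V E k" "card I = card V"
      unfolding DP_colorings_def independent_set_def by auto
    have finI: "finite I" using IH(1) finV finite_subset by blast
    have inj: "inj_on fst I"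
    proof (rule inj_onI)
      fix p q assume pq: "p \<in> I" "q \<in> I" "fst p = fst q"
      obtain u i where p: "p = (u,i)" by (cases p)
      obtain j where q: "q = (u,j)" using pq(3) p by (cases q) auto
      show "p = q"
      proof (rule ccontr)
        assume "p \<noteq> q"
        hence "i \<noteq> j" using p q by simp
        moreover have "u \<in> V" "i < m" "j < m" using p q pq IH(1) by auto
        ultimately have "{p,q} \<in> cEH m V E k" using p q cEH_clique by metis
        thus False using IH(2) pq by blast
      qed
    qed
    have "fst ` I \<subseteq> V" using IH(1) by auto
    moreover have "card (fst ` I) = card V" using card_image[OF inj] IH(3) by simp
    ultimately have fI: "fst ` I = V" using finV card_subset_eq by blast
    define c where "c = restrict (\<lambda>u. SOME i. (u,i) \<in> I) V"
    have cI: "(u, c u) \<in> I" if uV: "u \<in> V" for u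
    proof -
      obtain i where "(u,i) \<in> I" using fI uV by force
      thus ?thesis unfolding c_def using uV someI[of "\<lambda>i. (u,i) \<in> I"] by simp
    qed
    have Ieq: "I = ?g c"
    proof
      show "?g c \<subseteq> I" using cI by auto
      show "I \<subseteq> ?g c"
      proof
        fix p assume p: "p \<in> I"
        obtain u i where pu: "p = (u,i)" by (cases p)
        have u: "u \<in> V" using p pu IH(1) by auto
        have "p = (u, c u)" using inj_onD[OF inj _ p cI[OF u]] pu by simp
        thus "p \<in> ?g c" using u by auto
      qed
    qed
    have cP: "c \<in> V \<rightarrow>\<^sub>E {..<m}"
      using cI IH(1) unfolding c_def by (auto simp: PiE_def)
    have cG: "\<forall>e\<in>E. \<not> bad m c e (k e)"
    proof (intro ballI notI)
      fix e assume e: "e \<in> E" "bad m c e (k e)"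
      then obtain x y where xy: "e = {x,y}" "x \<noteq> y" "(c x + c y) mod m = k e"
        unfolding bad_def by blast
      have xV: "x \<in> V" and yV: "y \<in> V" using sg_edge[OF sg] e xy by auto
      have "c x < m" "c y < m" using cI[OF xV] cI[OF yV] IH(1) by auto
      hence "{(x, c x), (y, c y)} \<in> cEH m V E k"
        using xy e cEH_match[of x y E "c x" m "c y" k V] by simp
      thus False using IH(2) cI[OF xV] cI[OF yV] by blast
    qed
    show "I \<in> ?g ` Good m V k E" using Ieq cP cG unfolding Good_def by blast
  qed
  have finG: "finite (Good m V k E)" unfolding Good_def using finV by (simp add: finite_PiE)
  have "card (DP_colorings V (V \<times> {..<m}) (cEH m V E k)) \<le> card (?g ` Good m V k E)"
    using sub finG by (intro card_mono) auto
  also have "\<dots> \<le> card (Good m V k E)" by (rule card_image_le[OF finG])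
  finally show ?thesis unfolding P_DP_cover_def .
qed

theorem mainTheorem8:
  fixes V :: "'a set" and E :: "'a set set" and m :: nat
  assumes "simple_graph V E" and "m \<ge> 1"
  shows "real (P_DP V E m) \<le>
           real m ^ card V * (real m - 1) ^ card E / real m ^ card E"
proof -
  have finV: "finite V" using assms(1) simple_graph_def by auto
  have ed: "\<forall>e\<in>E. \<exists>x y. e = {x,y} \<and> x \<noteq> y" using assms(1) unfolding simple_graph_def by metis
  have EP: "E \<subseteq> Pow V"
  proof
    fix e assume e: "e \<in> E"
    then obtain x y where "e = {x,y}" "x \<noteq> y" using ed by blast
    thus "e \<in> Pow V" using sg_edge[OF assms(1)] e by auto
  qed
  have finE: "finite E" using finite_subset[OF EP] finV by simp
  obtain k where k: "real (card (Good m V k E)) \<le> real m ^ card V * ((real m - 1) / real m) ^ card E"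
    using main_count[OF finV assms(2) finE ed] by blast
  have mem: "P_DP_cover V (V \<times> {..<m}) (cEH m V E k) \<in>
     {P_DP_cover V VH EH | L VH EH. is_m_fold_cover m V E L VH EH}"
    using cover_ok[OF assms, of k] by (intro CollectI exI conjI) (rule refl)
  have "P_DP V E m \<le> P_DP_cover V (V \<times> {..<m}) (cEH m V E k)"
    unfolding P_DP_def by (rule cInf_lower[OF mem]) simp
  also have "\<dots> \<le> card (Good m V k E)" by (rule count_le[OF assms])
  finally have "real (P_DP V E m) \<le> real (card (Good m V k E))" by simp
  also have "\<dots> \<le> real m ^ card V * ((real m - 1) / real m) ^ card E" by (rule k)
  also have "\<dots> = real m ^ card V * (real m - 1) ^ card E / real m ^ card E"
    by (simp add: power_divide)
  finally show ?thesis .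
qed


end
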